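(* Let $t\geq 2$ be an integer, $m=4t+2$, $n=2^m+1$, and let $\delta_2=2^{4t-1}+\frac{2^{4t}-1}{5}$, $\delta_3=\delta_2-6$, and $\delta_4=\delta_2-8$, $\delta_5=\delta_2-24$ if $t=2$, $\delta_4=\delta_2-96$, $\delta_5=\delta_2-102$ if $t>2$. If $1\leq x\leq 2^{2t+2}+2^{2t+1}+3$ or $x\in\{\delta_2,\delta_3,\delta_4,\delta_5\}$, then $|C_x|=2m$.
   Context: For $n=2^m+1$ and an integer $x$, the 2-cyclotomic coset of $x$ modulo $n$ is $C_x=\{x\cdot 2^{j} \bmod n : j\geq 0\}\subseteq\{0,1,\dots,n-1\}$, and $|C_x|$ its cardinality. *)

theory Defs
  imports Main
begin

definition cyc_coset :: "nat \<Rightarrow> int \<Rightarrow> int set" where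
  "cyc_coset n x = {(x * 2 ^ j) mod int n | j::nat. True}"

end

theory Submission
  imports Defs
begin

lemma R_add:
  fixes N x :: int
  assumes "N dvd x*(2^a - 1)" "N dvd x*(2^b - 1)"
  shows "N dvd x*(2^(a+b) - 1)"
proof -
  have "x*(2^(a+b) - 1) = 2^a * (x*(2^b-1)) + x*(2^a-1)" by (simp add: power_add algebra_simps)
  thus ?thesis using assms by simp
qed

lemma R_mult:
  fixes N x :: int
  assumes "N dvd x*(2^a - 1)"
  shows "N dvd x*(2^(a*j) - 1)"
proof (induction j)
  case 0 then show ?case by simp
next
  case (Suc j)
  have "a * Suc j = a + a*j" by simp
  then show ?case using R_add[OF assms Suc.IH] by simp
qed

lemma R_cancel:
  fixes N x :: int
  assumes "odd N" "N dvd x*(2^a - 1)" "N dvd x*(2^(a+b) - 1)"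
  shows "N dvd x*(2^b - 1)"
proof -
  have "x*(2^(a+b) - 1) = 2^a * (x*(2^b-1)) + x*(2^a-1)" by (simp add: power_add algebra_simps)
  hence "2^a * (x*(2^b-1)) = x*(2^(a+b) - 1) - x*(2^a-1)" by simp
  hence "N dvd 2^a * (x*(2^b-1))" using assms(2,3) by (simp add: dvd_diff)
  moreover have "coprime N (2^a)" using assms(1) by simp
  ultimately show ?thesis using coprime_dvd_mult_right_iff by blast
qed

lemma R_half:
  fixes N x :: int and m :: nat
  assumes "N = 2^m + 1" "N dvd x*(2^m - 1)" "m > 0"
  shows "N dvd x"
proof -
  have "x*(2^m-1) = x*N - 2*x" using assms(1) by (simp add: algebra_simps)
  hence "2*x = x*N - x*(2^m-1)" by simp
  hence "N dvd 2*x" using assms(2) by (simp add: dvd_diff)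
  moreover have "odd N" using assms(1,3) by simp
  hence "coprime N 2" by simp
  ultimately show ?thesis using coprime_dvd_mult_right_iff by blast
qed

lemma four_dvd:
  fixes e t :: nat
  assumes "e dvd 4*(2*t+1)" "\<not> e dvd 2*(2*t+1)"
  shows "\<exists>f. e = 4*f"
proof (cases "odd e")
  case True
  have "(4::nat) = 2^2" by simp
  hence "coprime e 4" using True by (metis coprime_power_right_iff coprime_right_2_iff_odd)
  hence "e dvd 2*t+1" using assms(1) coprime_dvd_mult_right_iff by blast
  then show ?thesis using assms(2) by (metis dvd_mult)
next
  case False
  then obtain e' where e': "e = 2*e'" by auto
  show ?thesis
  proof (cases "odd e'")
    case True
    hence cop: "coprime e' 2" by simp
    have eq4: "(4::nat)*(2*t+1) = 2*(2*(2*t+1))" by simp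
    have "2*e' dvd 2*(2*(2*t+1))" using assms(1) unfolding e' eq4 .
    moreover have "(0::nat) < 2" by simp
    ultimately have "e' dvd 2*(2*t+1)" using nat_mult_dvd_cancel1[of 2 e' "2*(2*t+1)"] by blast
    hence "e' dvd 2*t+1" using cop coprime_dvd_mult_right_iff by blast
    hence "e dvd 2*(2*t+1)" unfolding e' by (rule mult_dvd_mono[OF dvd_refl])
    then show ?thesis using assms(2) by blast
  next
    case False
    then show ?thesis using e' by auto
  qed
qed

lemma core:
  fixes t k :: nat and x N :: int
  assumes m: "m = 4*t+2" and Nd: "N = (2::int)^m+1"
  assumes "N dvd x*(2^k-1)" "0<k" "k<2*m" "\<not> N dvd x"
    "\<forall>f. f dvd 2*t+1 \<and> f < 2*t+1 \<longrightarrow> \<not> N dvd x*(2^(2*f)+1)"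
  shows False
proof -
  have oddN: "odd N" using Nd m by simp
  have "(2::int)^(2*m) = 2^m*2^m" by (simp add: mult_2 power_add)
  moreover have "\<And>a::int. a*a - 1 = (a-1)*(a+1)" by (simp add: algebra_simps)
  ultimately have "(2::int)^(2*m) - 1 = (2^m-1)*N" using Nd by metis
  hence R2m: "N dvd x*(2^(2*m)-1)" by simp
  define e where "e = gcd k (2*m)"
  obtain u v where uv: "k*u = 2*m*v + e" using bezout_nat[of k "2*m"] \<open>0<k\<close> e_def by auto
  have "N dvd x*(2^(k*u)-1)" using R_mult[OF assms(3)] by simp
  hence "N dvd x*(2^(2*m*v+e)-1)" using uv by simp
  hence Re: "N dvd x*(2^e-1)" by (rule R_cancel[OF oddN R_mult[OF R2m, of v]])
  have edvd: "e dvd 2*m" unfolding e_def by simp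
  have "e \<le> k" unfolding e_def using \<open>0<k\<close> by (simp add: gcd_le1_nat)
  hence elt: "e < 2*m" using assms(5) by simp
  show False
  proof (cases "e dvd m")
    case True
    then obtain c where c: "m = e*c" by auto
    have "N dvd x*(2^m-1)" unfolding c by (rule R_mult[OF Re])
    moreover have "m > 0" using m by simp
    ultimately have "N dvd x" using R_half[OF Nd] by blast
    then show False using assms(6) by simp
  next
    case False
    have m4: "2*m = 4*(2*t+1)" using m by simp
    have m2: "m = 2*(2*t+1)" using m by simp
    have h1: "e dvd 4*(2*t+1)" using edvd unfolding m4 .
    have h2: "\<not> e dvd 2*(2*t+1)" using False unfolding m2 .
    obtain f where f: "e = 4*f" using four_dvd[OF h1 h2] by blast
    have "4*f dvd 4*(2*t+1)" using edvd unfolding f m4 .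
    moreover have "(0::nat) < 4" by simp
    ultimately have fd: "f dvd 2*t+1" using nat_mult_dvd_cancel1[of 4 f "2*t+1"] by blast
    have fl: "f < 2*t+1" using elt f m by simp
    define y where "y = x*(2^(2*f)+1)"
    have "4*f = 2*f+2*f" by simp
    hence p: "(2::int)^(4*f) = 2^(2*f)*2^(2*f)" by (metis power_add)
    have "x*(2^e-1) = y*(2^(2*f)-1)" unfolding y_def f p by (simp add: algebra_simps)
    hence Ry: "N dvd y*(2^(2*f)-1)" using Re by simp
    obtain c where c: "2*t+1 = f*c" using fd by auto
    have mc: "m = 2*f*c" using m c by simp
    have "N dvd y*(2^m-1)" unfolding mc by (rule R_mult[OF Ry])
    moreover have "m > 0" using m by simp
    ultimately have "N dvd y" using R_half[OF Nd] by blast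
    then show False using assms(7) fd fl y_def by auto
  qed
qed

lemma diff_lemma:
  fixes N x :: int
  assumes "odd N" "i < j" "x*2^i mod N = x*2^j mod N"
  shows "N dvd x*(2^(j-i)-1)"
proof -
  have "x*2^j = 2^i*(x*2^(j-i))" using assms(2) by (simp add: power_add[symmetric])
  hence "x*2^j - x*2^i = 2^i * (x*(2^(j-i)-1))" by (simp add: algebra_simps)
  moreover have "N dvd x*2^j - x*2^i" using assms(3) by (metis mod_eq_dvd_iff)
  ultimately have "N dvd 2^i * (x*(2^(j-i)-1))" by simp
  moreover have "coprime N (2^i)" using assms(1) by simp
  ultimately show ?thesis using coprime_dvd_mult_right_iff by blast
qed

lemma coset_card:
  fixes t :: nat and x :: int
  assumes A1: "\<not> (2^(4*t+2)+1::int) dvd x"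
    and A2: "\<forall>f. f dvd 2*t+1 \<and> f < 2*t+1 \<longrightarrow> \<not> (2^(4*t+2)+1::int) dvd x*(2^(2*f)+1)"
  shows "card (cyc_coset (2^(4*t+2)+1) x) = 2*(4*t+2)"
proof -
  define m where "m = 4*t+2"
  define N where "N = (2::int)^m+1"
  have Nn: "int (2^m+1) = N" unfolding N_def by simp
  have oddN: "odd N" unfolding N_def m_def by simp
  have "(2::int)^(2*m) = 2^m*2^m" by (simp add: mult_2 power_add)
  moreover have "\<And>a::int. a*a - 1 = (a-1)*(a+1)" by (simp add: algebra_simps)
  ultimately have "(2::int)^(2*m) - 1 = (2^m-1)*N" unfolding N_def by metis
  hence R2m: "\<And>y. N dvd y*(2^(2*m)-1)" by simp
  have per: "x*2^j mod N = x*2^(j mod (2*m)) mod N" for j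
  proof -
    define r where "r = j mod (2*m)"
    define q where "q = j div (2*m)"
    have "j = r + 2*m*q" unfolding r_def q_def by simp
    hence "x*2^j - x*2^r = (x*2^r)*(2^(2*m*q)-1)" by (simp add: power_add algebra_simps)
    moreover have "N dvd (x*2^r)*(2^(2*m*q)-1)" by (rule R_mult[OF R2m])
    ultimately show ?thesis unfolding r_def by (metis mod_eq_dvd_iff)
  qed
  have eq: "cyc_coset (2^m+1) x = (\<lambda>j. x*2^j mod N) ` {..<2*m}"
    unfolding cyc_coset_def Nn
  proof (intro equalityI subsetI)
    fix z assume "z \<in> {x * 2 ^ j mod N |j. True}"
    then obtain j where "z = x*2^j mod N" by auto
    hence "z = x*2^(j mod (2*m)) mod N" using per by simp
    moreover have "j mod (2*m) < 2*m" by (rule mod_less_divisor) (simp add: m_def)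
    ultimately show "z \<in> (\<lambda>j. x*2^j mod N) ` {..<2*m}" by blast
  next
    fix z assume "z \<in> (\<lambda>j. x*2^j mod N) ` {..<2*m}"
    then show "z \<in> {x * 2 ^ j mod N |j. True}" by blast
  qed
  have nodvd: False if "0 < k" "k < 2*m" "N dvd x*(2^k-1)" for k
    using core[OF m_def N_def that(3) that(1) that(2)] A1 A2 unfolding N_def m_def by blast
  have inj: "inj_on (\<lambda>j. x*2^j mod N) {..<2*m}"
  proof (rule inj_onI)
    fix i j assume i: "i \<in> {..<2*m}" and j: "j \<in> {..<2*m}" and e: "x*2^i mod N = x*2^j mod N"
    show "i = j"
    proof (rule ccontr)
      assume "i \<noteq> j"
      then consider "i < j" | "j < i" by linarith
      then show False
      proof cases
        case 1
        have "j - i < 2*m" using j by auto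
        then show False using nodvd[of "j-i"] diff_lemma[OF oddN 1 e] 1 by simp
      next
        case 2
        have "i - j < 2*m" using i by auto
        then show False using nodvd[of "i-j"] diff_lemma[OF oddN 2 e[symmetric]] 2 by simp
      qed
    qed
  qed
  show ?thesis using eq card_image[OF inj] unfolding m_def by simp
qed

lemma proper_div:
  fixes f t :: nat
  assumes "f dvd 2*t+1" "f < 2*t+1"
  shows "3*f \<le> 2*t+1 \<and> odd f"
proof -
  obtain c where c: "2*t+1 = f*c" using assms(1) by auto
  have oc: "odd c" and of: "odd f" using c by (metis even_mult_iff odd_two_times_div_two_succ even_add even_mult_iff odd_one dvd_triv_left)+
  have "c \<noteq> 1" using c assms(2) by auto
  moreover have "c \<noteq> 0"
  proof
    assume "c = 0" then show False using c by simp
  qed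
  ultimately have "c \<ge> 3" using oc by presburger
  hence "3*f \<le> c*f" by simp
  thus ?thesis using c of by (simp add: mult.commute)
qed

lemma bound_lemma:
  fixes s :: int and a f t :: nat
  assumes "0 < s" "s < 2^a" "a + 2*f + 1 \<le> 4*t+2"
  shows "\<not> (2^(4*t+2)+1::int) dvd s*(2^(2*f)+1)"
proof -
  have "(2::int)^(2*f)+1 \<le> 2^(2*f+1)" by simp
  hence "s*(2^(2*f)+1) \<le> s*2^(2*f+1)" using assms(1) by (simp add: mult_left_mono)
  also have "\<dots> < 2^a * 2^(2*f+1)" using assms(2) by (simp add: mult_strict_right_mono)
  also have "\<dots> = 2^(a+2*f+1)" by (simp add: power_add)
  also have "\<dots> \<le> 2^(4*t+2)" using assms(3) by (intro power_increasing) simp_all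
  finally have lt: "s*(2^(2*f)+1) < 2^(4*t+2)+1" by simp
  have "0 < s*(2^(2*f)+1)" using assms(1) by simp
  thus ?thesis using lt zdvd_not_zless by blast
qed

lemma five_dvd: "(5::int) dvd 2^(4*t) - 1"
proof (induction t)
  case 0 then show ?case by simp
next
  case (Suc t)
  have eq: "(2::int)^(4*Suc t) - 1 = 16*(2^(4*t)-1) + 15" by (simp add: power_add algebra_simps)
  show ?case unfolding eq by (rule dvd_add[OF dvd_mult[OF Suc.IH]]) simp
qed

lemma delta_eq:
  fixes t :: nat
  assumes "t \<ge> 1"
  shows "40*((2::int)^(4*t-1) + (2^(4*t)-1) div 5) = 7*(2^(4*t+2)+1) - 15"
proof -
  define A where "A = (2::int)^(4*t)"
  have "4*t = Suc (4*t-1)" using assms by simp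
  hence h1: "2*2^(4*t-1) = A" unfolding A_def by (metis power_Suc)
  have h2: "5*((A-1) div 5) = A-1" unfolding A_def using five_dvd[of t] by simp
  have h3: "(2::int)^(4*t+2) = 4*A" unfolding A_def by (simp add: power_add)
  have "40*((2::int)^(4*t-1) + (A-1) div 5) = 20*(2*2^(4*t-1)) + 8*(5*((A-1) div 5))" by simp
  also have "\<dots> = 20*A + 8*(A-1)" unfolding h1 h2 ..
  finally show ?thesis unfolding h3 A_def[symmetric] by simp
qed

lemma red:
  fixes N d s q :: int
  assumes "40*d = 7*N - s" "N dvd d*q"
  shows "N dvd s*q"
proof -
  have "40*d*q = (7*N-s)*q" using assms(1) by simp
  hence "s*q = 7*N*q - 40*(d*q)" by (simp add: algebra_simps)
  thus ?thesis using assms(2) by (simp add: dvd_diff)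
qed

lemma G:
  fixes t f :: nat and s :: int
  assumes "t \<ge> 3" "s \<in> {15,255,3855,4095}" "f dvd 2*t+1" "f < 2*t+1"
  shows "\<not> (2^(4*t+2)+1::int) dvd s*(2^(2*f)+1)"
proof -
  have pf: "3*f \<le> 2*t+1" "odd f" using proper_div[OF assms(3,4)] by auto
  have s0: "0 < s" "s < 2^12" using assms(2) by auto
  consider "t = 3" | "t = 4" | "t \<ge> 5" using assms(1) by linarith
  then show ?thesis
  proof cases
    case 1
    hence "f = 1" using pf by presburger
    then show ?thesis using assms(2) 1 by auto
  next
    case 2
    hence "f = 1 \<or> f = 3" using pf by presburger
    then show ?thesis using assms(2) 2 by auto
  next
    case 3
    hence "12 + 2*f + 1 \<le> 4*t+2" using pf by linarith
    then show ?thesis using bound_lemma[OF s0] by blast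
  qed
qed

theorem lemma4p6:
  fixes t :: nat and x :: int
  assumes "t \<ge> 2"
  defines "m \<equiv> 4 * t + 2"
  defines "n \<equiv> 2 ^ m + 1"
  defines "\<delta>2 \<equiv> (2::int) ^ (4 * t - 1) + (2 ^ (4 * t) - 1) div 5"
  defines "\<delta>3 \<equiv> \<delta>2 - 6"
  defines "\<delta>4 \<equiv> (if t = 2 then \<delta>2 - 8 else \<delta>2 - 96)"
  defines "\<delta>5 \<equiv> (if t = 2 then \<delta>2 - 24 else \<delta>2 - 102)"
  assumes "(1 \<le> x \<and> x \<le> 2 ^ (2 * t + 2) + 2 ^ (2 * t + 1) + 3) \<or> x \<in> {\<delta>2, \<delta>3, \<delta>4, \<delta>5}"
  shows "card (cyc_coset n x) = 2 * m"
proof -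
  define N where "N = (2::int)^(4*t+2)+1"
  have main: "\<not> N dvd x \<and> (\<forall>f. f dvd 2*t+1 \<and> f < 2*t+1 \<longrightarrow> \<not> N dvd x*(2^(2*f)+1))"
  proof (cases "1 \<le> x \<and> x \<le> 2 ^ (2 * t + 2) + 2 ^ (2 * t + 1) + 3")
    case True
    have p1: "(2::int)^(2*t+2) = 2*2^(2*t+1)" by simp
    have p2: "(2::int)^(2*t+3) = 4*2^(2*t+1)" by (simp add: power_add)
    have p3: "(2::int)^(2*t+1) \<ge> 2^5" using assms(1) by (intro power_increasing) simp_all
    have x0: "0 < x" "x < 2^(2*t+3)" using True p1 p2 p3 by simp_all
    have "\<not> N dvd x*(2^(2*0)+1)" unfolding N_def using assms(1) by (intro bound_lemma[OF x0]) simp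
    hence a1: "\<not> N dvd x" by (metis dvd_mult2)
    have "\<not> N dvd x*(2^(2*f)+1)" if "f dvd 2*t+1" "f < 2*t+1" for f
    proof -
      have "3*f \<le> 2*t+1" using proper_div[OF that] by simp
      hence "2*t+3 + 2*f + 1 \<le> 4*t+2" using assms(1) by presburger
      thus ?thesis unfolding N_def by (rule bound_lemma[OF x0])
    qed
    then show ?thesis using a1 by blast
  next
    case False
    hence xd: "x \<in> {\<delta>2, \<delta>3, \<delta>4, \<delta>5}" using assms(8) by blast
    show ?thesis
    proof (cases "t = 2")
      case True
      have "\<delta>2 = 179" unfolding \<delta>2_def True by simp
      hence xs: "x \<in> {179, 173, 171, 155}" using xd True unfolding \<delta>3_def \<delta>4_def \<delta>5_def by auto
      have "\<not> N dvd x*(2^(2*f)+1)" if "f dvd 2*t+1" "f < 2*t+1" for f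
      proof -
        have "f = 1" using proper_div[OF that] True by presburger
        then show ?thesis using xs True unfolding N_def by auto
      qed
      moreover have "\<not> N dvd x" using xs True unfolding N_def by auto
      ultimately show ?thesis by blast
    next
      case False
      have t3: "t \<ge> 3" using False assms(1) by simp
      have d2: "40*\<delta>2 = 7*N - 15" unfolding \<delta>2_def N_def using delta_eq[of t] assms(1) by simp
      obtain s where s: "s \<in> {15,255,3855,4095}" "40*x = 7*N - s"
      proof -
        consider "x = \<delta>2" | "x = \<delta>3" | "x = \<delta>4" | "x = \<delta>5" using xd by blast
        then show ?thesis
        proof cases
          case 1 then show ?thesis using that[of 15] d2 by simp
        next
          case 2 then show ?thesis using that[of 255] d2 unfolding \<delta>3_def by simp
        next
          case 3 then show ?thesis using that[of 3855] d2 False unfolding \<delta>4_def by simp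
        next
          case 4 then show ?thesis using that[of 4095] d2 False unfolding \<delta>5_def by simp
        qed
      qed
      have s0: "0 < s" "s < 2^12" using s(1) by auto
      have "\<not> N dvd s*(2^(2*0)+1)" unfolding N_def using t3 by (intro bound_lemma[OF s0]) simp
      hence "\<not> N dvd x*(2^(2*0)+1)" using red[OF s(2)] by blast
      hence a1: "\<not> N dvd x" by (metis dvd_mult2)
      have "\<not> N dvd x*(2^(2*f)+1)" if "f dvd 2*t+1" "f < 2*t+1" for f
        using G[OF t3 s(1) that] red[OF s(2)] unfolding N_def by blast
      then show ?thesis using a1 by blast
    qed
  qed
  show ?thesis using coset_card[of t x] main unfolding n_def m_def N_def by blast
qed

end
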